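(* If $A\subset\mathbb{R}^d$ is a finite set in general position, then for all $K\in\mathbb{N}$, every simplicial complex in the bifiltration $\textnormal{S-Del}^{\le K}$ has dimension at most $2\binom{d+1}{\lfloor\frac{d+1}{2}\rfloor}$.
   Context: For $\tilde A\subseteq A$ let $\mathrm{Ball}_r(\tilde A)=\{b: \|b-\tilde a\|\le r\ \forall\tilde a\in\tilde A\}$ and for $|\tilde A|=k$ let $\mathrm{Vor}(\tilde A)=\{b\in\mathbb{R}^d: \|b-\tilde a\|\le\|b-a\|\ \forall\tilde a\in\tilde A, a\in A\setminus\tilde A\}$. Let $\mathrm{Del}^{+}_{r,k}$ be the abstract simplicial complex whose vertices are subsets $\tilde A\subseteq A$ with $|\tilde A|\in\{k,k+1\}$ and whose simplices are the sets $\sigma$ of such subsets with $\bigcap_{\tilde A\in\sigma}(\mathrm{Ball}_r(\tilde A)\cap\mathrm{Vor}(\tilde A))\neq\emptyset$. For $r\ge0$ and $k\in\mathbb{N}=\{1,2,\dots\}$, $\textnormal{S-Del}^{\le K}_{r,k}=\bigcup_{i=k}^{K-1}\mathrm{Del}^{+}_{r,i}$. *)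

theory Defs
  imports "HOL-Analysis.Analysis"
begin

text \<open>Points live in an abstract Euclidean space 'a with d = DIM('a).\<close>

definition Ball_r :: "real \<Rightarrow> 'a::euclidean_space set \<Rightarrow> 'a set" where
  "Ball_r r At = {b. \<forall>a\<in>At. norm (b - a) \<le> r}"

definition Vor :: "'a::euclidean_space set \<Rightarrow> 'a set \<Rightarrow> 'a set" where
  "Vor A At = {b. \<forall>t\<in>At. \<forall>a\<in>A - At. norm (b - t) \<le> norm (b - a)}"

definition del_vertices :: "'a set \<Rightarrow> nat \<Rightarrow> 'a set set" where
  "del_vertices A k = {At. At \<subseteq> A \<and> (card At = k \<or> card At = k + 1)}"

definition Del_plus :: "'a::euclidean_space set \<Rightarrow> real \<Rightarrow> nat \<Rightarrow> 'a set set set" where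
  "Del_plus A r k = {\<sigma>. \<sigma> \<subseteq> del_vertices A k \<and>
      (\<Inter>At\<in>\<sigma>. Ball_r r At \<inter> Vor A At) \<noteq> {}}"

definition S_Del :: "'a::euclidean_space set \<Rightarrow> nat \<Rightarrow> real \<Rightarrow> nat \<Rightarrow> 'a set set set" where
  "S_Del A K r k = (\<Union>i\<in>{k..<K}. Del_plus A r i)"

definition general_position :: "'a::euclidean_space set \<Rightarrow> bool" where
  "general_position A \<longleftrightarrow>
     (\<forall>S\<subseteq>A. card S \<le> DIM('a) + 1 \<longrightarrow> \<not> affine_dependent S) \<and>
     (\<forall>S\<subseteq>A. card S = DIM('a) + 2 \<longrightarrow> \<not> (\<exists>c \<rho>. \<forall>a\<in>S. dist a c = \<rho>))"

end

theory Submission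
  imports Defs
begin

lemma choose_mono_n: "m \<le> n \<Longrightarrow> (m choose j) \<le> (n choose j)"
proof (induction n rule: dec_induct)
  case base then show ?case by simp
next
  case (step n)
  have "n choose j \<le> Suc n choose j"
    by (cases j) simp_all
  with step show ?case by linarith
qed

lemma count_F:
  fixes A :: "'a::euclidean_space set"
  assumes fin: "finite A" and gp: "general_position A"
  shows "card {At. At \<subseteq> A \<and> card At = i \<and> b \<in> Vor A At} \<le> (DIM('a)+1 choose ((DIM('a)+1) div 2))"
    (is "card ?F \<le> ?C")
proof (cases "?F = {}")
  case True then show ?thesis by (simp only: card.empty)
next
  case False
  then obtain At0 where At0: "At0 \<subseteq> A" "card At0 = i" "b \<in> Vor A At0" by auto
  have Cpos: "1 \<le> ?C" by (simp add: Suc_leI)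
  show ?thesis
  proof (cases "i = 0")
    case True
    have "?F \<subseteq> {{}}"
    proof
      fix X assume "X \<in> ?F"
      then have "X \<subseteq> A" "card X = 0" using True by auto
      then have "X = {}" using fin finite_subset card_0_eq by metis
      then show "X \<in> {{}}" by simp
    qed
    then have "card ?F \<le> card {{}::'a set}" by (intro card_mono) simp_all
    then have "card ?F \<le> 1" by simp
    then show ?thesis using Cpos by linarith
  next
    case False
    have fin0: "finite At0" using At0(1) fin finite_subset by blast
    have ne0: "At0 \<noteq> {}" using False At0(2) by auto
    define t where "t = Max ((\<lambda>a. norm (b - a)) ` At0)"
    have tle: "\<forall>a\<in>At0. norm (b - a) \<le> t" unfolding t_def using fin0 by simp
    obtain z where z: "z \<in> At0" "norm (b - z) = t"
    proof -
      have "t \<in> (\<lambda>a. norm (b - a)) ` At0" unfolding t_def using fin0 ne0 by (intro Max_in) auto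
      then show ?thesis using that by auto
    qed
    define P where "P = {a\<in>A. norm (b - a) < t}"
    define S where "S = {a\<in>A. norm (b - a) = t}"
    have key: "At = P \<union> (At \<inter> S)" if AtF: "At \<in> ?F" for At
    proof -
      from AtF have At: "At \<subseteq> A" "card At = i" "b \<in> Vor A At" by auto
      have finA: "finite At" using At(1) fin finite_subset by blast
      have le: "norm (b - x) \<le> t" if "x \<in> At" for x
      proof (rule ccontr)
        assume gt: "\<not> ?thesis"
        have "\<not> At0 \<subseteq> At"
        proof
          assume "At0 \<subseteq> At"
          then have "At0 = At" using card_subset_eq[OF finA] At(2) At0(2) by metis
          then show False using gt that tle by auto
        qed
        then obtain y where y: "y \<in> At0" "y \<notin> At" by auto
        then have "norm (b - x) \<le> norm (b - y)" using At(3) that At0(1) unfolding Vor_def by blast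
        then show False using gt tle y(1) by (meson order_trans)
      qed
      have lt: "a \<in> At" if "a \<in> A" "norm (b - a) < t" for a
      proof (rule ccontr)
        assume na: "a \<notin> At"
        have small: "\<forall>x\<in>At. norm (b - x) \<le> norm (b - a)" using At(3) that(1) na unfolding Vor_def by blast
        have "\<not> At \<subseteq> At0"
        proof
          assume "At \<subseteq> At0"
          then have "At = At0" using card_subset_eq[OF fin0] At(2) At0(2) by metis
          then show False using small z that(2) by (metis not_le)
        qed
        then obtain w where w: "w \<in> At" "w \<notin> At0" by auto
        then have "norm (b - z) \<le> norm (b - w)" using At0(3) z(1) At(1) unfolding Vor_def by blast
        then show False using small w(1) z(2) that(2) by (meson not_le order_trans)
      qed
      show ?thesis
      proof (rule set_eqI)
        fix x show "x \<in> At \<longleftrightarrow> x \<in> P \<union> (At \<inter> S)"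
          unfolding P_def S_def using le[of x] lt[of x] At(1) by auto
      qed
    qed
    have finS: "finite S" unfolding S_def using fin by simp
    have cardS: "card S \<le> DIM('a) + 1"
    proof (rule ccontr)
      assume "\<not> ?thesis"
      then obtain T where T: "T \<subseteq> S" "card T = DIM('a) + 2"
        using obtain_subset_with_card_n[of "DIM('a) + 2" S] by force
      have "T \<subseteq> A" "\<forall>a\<in>T. dist a b = t" using T(1) unfolding S_def by (auto simp: dist_norm norm_minus_commute)
      moreover have "\<not> (\<exists>c \<rho>. \<forall>a\<in>T. dist a c = \<rho>)"
        using gp T(2) \<open>T \<subseteq> A\<close> unfolding general_position_def by auto
      ultimately show False by blast
    qed
    have PS: "P \<inter> S = {}" unfolding P_def S_def by auto
    have finP: "finite P" unfolding P_def using fin by simp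
    have inj: "inj_on (\<lambda>At. At \<inter> S) ?F"
    proof (rule inj_onI)
      fix X Y assume "X \<in> ?F" "Y \<in> ?F" "X \<inter> S = Y \<inter> S"
      then show "X = Y" using key by metis
    qed
    have img: "(\<lambda>At. At \<inter> S) ` ?F \<subseteq> {X. X \<subseteq> S \<and> card X = i - card P}"
    proof (rule image_subsetI)
      fix At assume AtF0: "At \<in> ?F"
      then have AtF: "At \<subseteq> A" "card At = i" "b \<in> Vor A At" by auto
      have e: "At = P \<union> (At \<inter> S)" using key AtF0 by blast
      have "card At = card P + card (At \<inter> S)"
        using card_Un_disjoint[OF finP _, of "At \<inter> S"] PS finS e by auto
      then show "At \<inter> S \<in> {X. X \<subseteq> S \<and> card X = i - card P}" using AtF(2) by simp
    qed
    have "card ?F = card ((\<lambda>At. At \<inter> S) ` ?F)" using card_image[OF inj] by simp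
    also have "\<dots> \<le> card {X. X \<subseteq> S \<and> card X = i - card P}"
      by (rule card_mono) (use finS img in auto)
    also have "\<dots> = card S choose (i - card P)" using n_subsets[OF finS] by simp
    also have "\<dots> \<le> (DIM('a)+1) choose (i - card P)" by (rule choose_mono_n[OF cardS])
    also have "\<dots> \<le> ?C" by (rule binomial_maximum)
    finally show ?thesis .
  qed
qed

theorem lemma14:
  fixes A :: "'a::euclidean_space set"
  assumes "finite A" and "general_position A"
  shows "\<forall>K::nat. K \<ge> 1 \<longrightarrow> (\<forall>r::real. r \<ge> 0 \<longrightarrow> (\<forall>k::nat. k \<ge> 1 \<longrightarrow>
           (\<forall>\<sigma>\<in>S_Del A K r k.
              card \<sigma> \<le> 2 * (DIM('a) + 1 choose ((DIM('a) + 1) div 2)) + 1)))"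
proof (intro allI impI ballI)
  fix K r k \<sigma>
  assume "\<sigma> \<in> S_Del A K r k"
  then obtain i where \<sigma>: "\<sigma> \<subseteq> del_vertices A i" "(\<Inter>At\<in>\<sigma>. Ball_r r At \<inter> Vor A At) \<noteq> {}"
    unfolding S_Del_def Del_plus_def by auto
  then obtain b where b: "\<forall>At\<in>\<sigma>. b \<in> Vor A At" by auto
  let ?F = "\<lambda>i. {At. At \<subseteq> A \<and> card At = i \<and> b \<in> Vor A At}"
  let ?C = "DIM('a) + 1 choose ((DIM('a) + 1) div 2)"
  have sub: "\<sigma> \<subseteq> ?F i \<union> ?F (i+1)" using \<sigma>(1) b unfolding del_vertices_def by auto
  have fin: "finite (?F j)" for j
    by (rule finite_subset[of _ "Pow A"]) (use assms(1) in auto)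
  have "card \<sigma> \<le> card (?F i \<union> ?F (i+1))" by (rule card_mono) (use fin sub in auto)
  also have "\<dots> \<le> card (?F i) + card (?F (i+1))" by (rule card_Un_le)
  also have "\<dots> \<le> ?C + ?C" using count_F[OF assms, of i b] count_F[OF assms, of "i+1" b] by linarith
  finally show "card \<sigma> \<le> 2 * ?C + 1" by simp
qed

end
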